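(* Let $d_{in}, d_V, p, M$ be positive integers and $d_K$ an even positive integer. Fix weights $W_Q, W_K\in\mathbb{R}^{d_{in}\times d_K}$, $W_V\in\mathbb{R}^{d_{in}\times d_V}$, a feature map $\phi:\mathbb{R}^{d_K}\to\mathbb{R}^{d_K}$, a map $D_1:\mathbb{R}^{d_K}\to\mathbb{R}^{p}$, and a map $D_2$ assigning to every finite sequence of tokens (rows in $\mathbb{R}^{d_{in}}$) a vector in $\mathbb{R}^{p}$, such that there is a map $D_2^{*}$ on finite token sequences with $D_2([A;B]) - D_2(B) = D_2^{*}(A)$ for all finite token sequences $A, B$. For a token sequence $Y = [Y_1,\dots,Y_n]^T\in\mathbb{R}^{n\times d_{in}}$, bias matrix $b_{KV}\in\mathbb{R}^{d_K\times d_V}$ and bias vector $b_D\in\mathbb{R}^p$, define $Q_i = Y_iW_Q$, $K_i = Y_iW_K$, $V_i = Y_iW_V$ (viewed as column vectors) and, for $1\le i\le n$, the output at position $i$ by $$O_i(Y,b_{KV},b_D)^{T} = \frac{\big(R^{d_K}_{\Theta,i}\phi(Q_i)\big)^{T}\Big[\sum_{j=1}^{i}R^{d_K}_{\Theta,j}\phi(K_j)V_j^{T} + b_{KV}\Big]}{D_1(Q_i)^{T}\big(D_2([Y_1,\dots,Y_i]^T) + b_D\big)},$$ assuming the denominators are nonzero. Let $X' = [X'_1,\dots,X'_M]^T\in\mathbb{R}^{M\times d_{in}}$ be a fixed in-context prompt with $K'_j = X'_jW_K$, $V'_j = X'_jW_V$, and set $$b'_{KV} = R^{d_K}_{\Theta,-M}\,b_{KV}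 + \sum_{j=1}^{M}R^{d_K}_{\Theta,j-M}\,\phi(K'_j)V'^{T}_j,\qquad b'_D = b_D + D_2^{*}(X').$$ Then for every $N\ge1$, every $X = [X_1,\dots,X_N]^T\in\mathbb{R}^{N\times d_{in}}$ and every $1\le i\le N$, $$O_{M+i}([X';X],b_{KV},b_D) = O_i(X,b'_{KV},b'_D),$$ where $[X';X] = [X'_1,\dots,X'_M,X_1,\dots,X_N]^T$.
   Context: Rotary matrix: for $\Theta = \{\theta_k = 10000^{-2(k-1)/d_K} : k = 1,\dots,d_K/2\}$ and an integer $m$, $R^{d_K}_{\Theta,m}$ is the $d_K\times d_K$ block-diagonal matrix whose $k$-th $2\times 2$ diagonal block is $\begin{pmatrix}\cos m\theta_k & -\sin m\theta_k\\ \sin m\theta_k & \cos m\theta_k\end{pmatrix}$. The defined $O_i$ is a causally masked (autoregressive) linearized attention layer with rotary positional encoding, augmented with a Key-Value bias $b_{KV}$ added to the Key-Value sum and a bias $b_D$ added to the normalizing term. The separation property of $D_2$ is the paper's standing assumption for this result (it holds e.g. for $D_2\equiv 1$ with $D_1\equiv1$, and for $D_2(Y)=\sum_j\phi(Y_jW_K)$ with $D_1=\phi$). *)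

theory Defs
  imports "HOL-Analysis.Analysis"
begin

(* Conventions: a vector in R^n is a function nat => real whose entries at
   indices >= n are 0 (only indices < n are ever read); a d1 x d2 matrix is a
   function nat => nat => real (entries (a,b), a < d1, b < d2 are used).
   Tokens are row vectors in R^d_in; a token sequence is a list of tokens,
   Y_j = Y ! (j - 1) (1-based positions j). *)

definition valid_vec :: "nat \<Rightarrow> (nat \<Rightarrow> real) \<Rightarrow> bool" where
  "valid_vec n x \<longleftrightarrow> (\<forall>a\<ge>n. x a = 0)"

definition vecmat :: "nat \<Rightarrow> nat \<Rightarrow> (nat \<Rightarrow> real) \<Rightarrow> (nat \<Rightarrow> nat \<Rightarrow> real) \<Rightarrow> (nat \<Rightarrow> real)" where
  "vecmat din d y W = (\<lambda>k. if k < d then (\<Sum>a<din. y a * W a k) else 0)"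

(* theta_k = 10000^(-2(k-1)/dK), k = 1..dK/2; here with 0-based block index b = k-1 *)
definition rope_theta :: "nat \<Rightarrow> nat \<Rightarrow> real" where
  "rope_theta dK b = 10000 powr (- (2 * real b) / real dK)"

definition rope :: "nat \<Rightarrow> int \<Rightarrow> (nat \<Rightarrow> real) \<Rightarrow> (nat \<Rightarrow> real)" where
  "rope dK m v = (\<lambda>k. if k < dK then
      (let b = k div 2; t = real_of_int m * rope_theta dK b in
        if even k then cos t * v (2*b) - sin t * v (2*b+1)
        else sin t * v (2*b) + cos t * v (2*b+1))
     else 0)"

definition rope_mat :: "nat \<Rightarrow> int \<Rightarrow> (nat \<Rightarrow> nat \<Rightarrow> real) \<Rightarrow> (nat \<Rightarrow> nat \<Rightarrow> real)" where
  "rope_mat dK m B = (\<lambda>k c. rope dK m (\<lambda>a. if a < dK then B a c else 0) k)"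

definition attn_out ::
  "nat \<Rightarrow> nat \<Rightarrow> nat \<Rightarrow> nat \<Rightarrow>
   (nat \<Rightarrow> nat \<Rightarrow> real) \<Rightarrow> (nat \<Rightarrow> nat \<Rightarrow> real) \<Rightarrow> (nat \<Rightarrow> nat \<Rightarrow> real) \<Rightarrow>
   ((nat \<Rightarrow> real) \<Rightarrow> (nat \<Rightarrow> real)) \<Rightarrow> ((nat \<Rightarrow> real) \<Rightarrow> (nat \<Rightarrow> real)) \<Rightarrow>
   ((nat \<Rightarrow> real) list \<Rightarrow> (nat \<Rightarrow> real)) \<Rightarrow>
   (nat \<Rightarrow> real) list \<Rightarrow> (nat \<Rightarrow> nat \<Rightarrow> real) \<Rightarrow> (nat \<Rightarrow> real) \<Rightarrow> nat \<Rightarrow> (nat \<Rightarrow> real)" where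
  "attn_out din dK dV p WQ WK WV phi D1 D2 Y bKV bD i =
    (let Q = vecmat din dK (Y ! (i - 1)) WQ;
         K = (\<lambda>j. vecmat din dK (Y ! (j - 1)) WK);
         V = (\<lambda>j. vecmat din dV (Y ! (j - 1)) WV);
         q = rope dK (int i) (phi Q);
         den = (\<Sum>l<p. D1 Q l * (D2 (take i Y) l + bD l))
     in (\<lambda>c. if c < dV then
           (\<Sum>k<dK. q k * ((\<Sum>j\<in>{1..i}. rope dK (int j) (phi (K j)) k * V j c) + bKV k c)) / den
         else 0))"

definition attn_den ::
  "nat \<Rightarrow> nat \<Rightarrow> nat \<Rightarrow> (nat \<Rightarrow> nat \<Rightarrow> real) \<Rightarrow> ((nat \<Rightarrow> real) \<Rightarrow> (nat \<Rightarrow> real)) \<Rightarrow>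
   ((nat \<Rightarrow> real) list \<Rightarrow> (nat \<Rightarrow> real)) \<Rightarrow> (nat \<Rightarrow> real) list \<Rightarrow> (nat \<Rightarrow> real) \<Rightarrow> nat \<Rightarrow> real" where
  "attn_den din dK p WQ D1 D2 Y bD i =
    (\<Sum>l<p. D1 (vecmat din dK (Y ! (i - 1)) WQ) l * (D2 (take i Y) l + bD l))"

end

theory Submission
  imports Defs
begin

definition ipk :: "nat \<Rightarrow> int \<Rightarrow> int \<Rightarrow> (nat \<Rightarrow> real) \<Rightarrow> (nat \<Rightarrow> real) \<Rightarrow> real" where
  "ipk dK a b u w = (\<Sum>k<dK. rope dK a u k * rope dK b w k)"

lemma sum_pairs: "(\<Sum>k<2*n. f k) = (\<Sum>b<n. f (2*b) + f (2*b+1::nat)) "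
  by (induction n) (auto simp: sum.distrib algebra_simps)

lemma ipk_G:
  assumes "even dK"
  shows "ipk dK a b u w = (\<Sum>bb<dK div 2. cos (real_of_int (a-b) * rope_theta dK bb) * (u (2*bb) * w (2*bb) + u (2*bb+1) * w (2*bb+1))
     + sin (real_of_int (a-b) * rope_theta dK bb) * (u (2*bb) * w (2*bb+1) - u (2*bb+1) * w (2*bb)))"
proof -
  obtain n where n: "dK = 2*n" using assms by blast
  have "ipk dK a b u w = (\<Sum>bb<n. rope dK a u (2*bb) * rope dK b w (2*bb) + rope dK a u (2*bb+1) * rope dK b w (2*bb+1))"
    unfolding ipk_def n by (rule sum_pairs)
  also have "\<dots> = (\<Sum>bb<n. cos (real_of_int (a-b) * rope_theta dK bb) * (u (2*bb) * w (2*bb) + u (2*bb+1) * w (2*bb+1))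
     + sin (real_of_int (a-b) * rope_theta dK bb) * (u (2*bb) * w (2*bb+1) - u (2*bb+1) * w (2*bb)))"
  proof (rule sum.cong[OF refl])
    fix bb assume "bb \<in> {..<n}"
    then have lt: "2*bb < dK" "2*bb+1 < dK" using n by auto
    have d1: "(2*bb) div 2 = bb" "(2*bb+1) div 2 = bb" by auto
    define A where "A = real_of_int a * rope_theta dK bb"
    define B where "B = real_of_int b * rope_theta dK bb"
    have AB: "real_of_int (a-b) * rope_theta dK bb = A - B" unfolding A_def B_def by (simp add: algebra_simps)
    show "rope dK a u (2*bb) * rope dK b w (2*bb) + rope dK a u (2*bb+1) * rope dK b w (2*bb+1) =
       cos (real_of_int (a-b) * rope_theta dK bb) * (u (2*bb) * w (2*bb) + u (2*bb+1) * w (2*bb+1))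
     + sin (real_of_int (a-b) * rope_theta dK bb) * (u (2*bb) * w (2*bb+1) - u (2*bb+1) * w (2*bb))"
      unfolding AB rope_def using lt d1
      by (simp add: Let_def A_def[symmetric] B_def[symmetric] cos_diff sin_diff algebra_simps)
  qed
  finally show ?thesis using n by simp
qed

lemma ipk_shift:
  assumes "even dK"
  shows "ipk dK a b u w = ipk dK (a+c) (b+c) u w"
  using ipk_G[OF assms, of a b u w] ipk_G[OF assms, of "a+c" "b+c" u w] by simp

lemma rope0:
  assumes "even dK" "k < dK"
  shows "rope dK 0 v k = v k"
proof -
  have "odd k \<Longrightarrow> 2 * (k div 2) + 1 = k" by presburger
  moreover have "even k \<Longrightarrow> 2 * (k div 2) = k" by presburger
  ultimately show ?thesis unfolding rope_def using assms by (auto simp: Let_def)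
qed


lemma num_expand:
  "(\<Sum>k<dK. rope dK a u k * ((\<Sum>j\<in>J. rope dK (g j) (h j) k * v j) + B k)) =
   (\<Sum>j\<in>J. v j * ipk dK a (g j) u (h j)) + (\<Sum>k<dK. rope dK a u k * B k)"
  by (simp add: ipk_def distrib_left sum.distrib sum_distrib_left sum_distrib_right sum.swap[of _ J] algebra_simps)

lemma ipk_bias:
  assumes "even dK"
  shows "(\<Sum>k<dK. rope dK a u k * B k) = ipk dK a 0 u (\<lambda>x. if x < dK then B x else 0)"
  unfolding ipk_def by (rule sum.cong) (auto simp: rope0[OF assms])


theorem theorem4p5:
  fixes din dK dV p M :: nat
    and WQ WK WV :: "nat \<Rightarrow> nat \<Rightarrow> real"
    and phi D1 :: "(nat \<Rightarrow> real) \<Rightarrow> (nat \<Rightarrow> real)"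
    and D2 D2s :: "(nat \<Rightarrow> real) list \<Rightarrow> (nat \<Rightarrow> real)"
    and bKV :: "nat \<Rightarrow> nat \<Rightarrow> real" and bD :: "nat \<Rightarrow> real"
    and Xp X :: "(nat \<Rightarrow> real) list" and i :: nat
  assumes "din > 0" "dV > 0" "p > 0" "M > 0" "dK > 0" "even dK"
    and sep: "\<And>A B. \<forall>y\<in>set A. valid_vec din y \<Longrightarrow> \<forall>y\<in>set B. valid_vec din y \<Longrightarrow>
              \<forall>l<p. D2 (A @ B) l - D2 B l = D2s A l"
    and "length Xp = M" "\<forall>y\<in>set Xp. valid_vec din y"
    and "length X \<ge> 1" "\<forall>y\<in>set X. valid_vec din y"
    and "1 \<le> i" "i \<le> length X"
    and "attn_den din dK p WQ D1 D2 (Xp @ X) bD (M + i) \<noteq> 0"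
    and "attn_den din dK p WQ D1 D2 X (\<lambda>l. bD l + D2s Xp l) i \<noteq> 0"
  shows "attn_out din dK dV p WQ WK WV phi D1 D2 (Xp @ X) bKV bD (M + i) =
         attn_out din dK dV p WQ WK WV phi D1 D2 X
           (\<lambda>k c. rope_mat dK (- int M) bKV k c +
              (\<Sum>j\<in>{1..M}. rope dK (int j - int M) (phi (vecmat din dK (Xp ! (j - 1)) WK)) k
                              * vecmat din dV (Xp ! (j - 1)) WV c))
           (\<lambda>l. bD l + D2s Xp l) i"
proof -
  let ?L = "Xp @ X"
  have ei: "even dK" by fact
  have hQ: "?L ! (M + i - 1) = X ! (i - 1)"
    using assms(8,12) nth_append_right[of Xp "M + i - 1" X] by simp
  have htake: "take (M + i) ?L = Xp @ take i X" using assms(8) by simp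
  have sepi: "\<forall>l<p. D2 (Xp @ take i X) l - D2 (take i X) l = D2s Xp l"
    apply (rule sep) using assms(9,11) by (auto dest: in_set_takeD)
  have den: "(\<Sum>l<p. D1 (vecmat din dK (?L ! (M + i - 1)) WQ) l * (D2 (take (M + i) ?L) l + bD l)) =
     (\<Sum>l<p. D1 (vecmat din dK (X ! (i - 1)) WQ) l * (D2 (take i X) l + (bD l + D2s Xp l)))"
    unfolding hQ htake
    by (rule sum.cong) (use sepi in \<open>auto simp: algebra_simps\<close>)
  define u where "u = phi (vecmat din dK (X ! (i - 1)) WQ)"
  define Kf where "Kf = (\<lambda>Y j. phi (vecmat din dK (Y ! (j - 1)) WK))"
  define Vf where "Vf = (\<lambda>Y j c. vecmat din dV (Y ! (j - 1)) WV c)"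
  define bc where "bc = (\<lambda>c x. if x < dK then bKV x c else 0)"
  have sh: "\<And>a b w. ipk dK (int (M + i)) b u w = ipk dK (int i) (b - int M) u w"
    using ipk_shift[OF ei, of "int (M + i)" _ u _ "- int M"] by simp
  have sh2: "\<And>b w. ipk dK (int M + int i) b u w = ipk dK (int i) (b - int M) u w"
    using sh by simp
  have num: "(\<Sum>k<dK. rope dK (int (M + i)) u k * ((\<Sum>j\<in>{1..M + i}. rope dK (int j) (Kf ?L j) k * Vf ?L j c) + bKV k c))
    = (\<Sum>k<dK. rope dK (int i) u k * ((\<Sum>j\<in>{1..i}. rope dK (int j) (Kf X j) k * Vf X j c) +
         (rope_mat dK (- int M) bKV k c +
              (\<Sum>j\<in>{1..M}. rope dK (int j - int M) (Kf Xp j) k * Vf Xp j c))))" for c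
  proof -
    have split: "{1..M+i} = {1..M} \<union> {M+1..M+i}" by auto
    have A: "(\<Sum>j\<in>{1..M}. Vf ?L j c * ipk dK (int (M + i)) (int j) u (Kf ?L j)) =
      (\<Sum>j\<in>{1..M}. Vf Xp j c * ipk dK (int i) (int j - int M) u (Kf Xp j))"
      by (rule sum.cong) (use assms(8) in \<open>auto simp: sh sh2 Kf_def Vf_def nth_append\<close>)
    have B: "(\<Sum>j\<in>{M+1..M+i}. Vf ?L j c * ipk dK (int (M + i)) (int j) u (Kf ?L j)) =
      (\<Sum>j\<in>{1..i}. Vf X j c * ipk dK (int i) (int j) u (Kf X j))"
    proof -
      have "(\<Sum>j\<in>{M+1..M+i}. Vf ?L j c * ipk dK (int (M + i)) (int j) u (Kf ?L j)) =
        (\<Sum>j\<in>{1..i}. Vf ?L (j+M) c * ipk dK (int (M + i)) (int (j+M)) u (Kf ?L (j+M)))"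
        using sum.shift_bounds_cl_nat_ivl[of "\<lambda>j. Vf ?L j c * ipk dK (int (M + i)) (int j) u (Kf ?L j)" 1 M i]
        by (simp add: add.commute)
      also have "\<dots> = (\<Sum>j\<in>{1..i}. Vf X j c * ipk dK (int i) (int j) u (Kf X j))"
        by (rule sum.cong) (use assms(8) in \<open>auto simp: sh sh2 Kf_def Vf_def nth_append\<close>)
      finally show ?thesis .
    qed
    have C: "rope_mat dK (- int M) bKV k c = rope dK (- int M) (bc c) k" for k
      unfolding rope_mat_def bc_def by simp
    have D: "(\<Sum>k<dK. rope dK (int i) u k * (rope dK (- int M) (bc c) k +
              (\<Sum>j\<in>{1..M}. rope dK (int j - int M) (Kf Xp j) k * Vf Xp j c)))
           = ipk dK (int i) (- int M) u (bc c) + (\<Sum>j\<in>{1..M}. Vf Xp j c * ipk dK (int i) (int j - int M) u (Kf Xp j))"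
      using num_expand[where dK=dK and a="int i" and u=u and J="{1..M}" and g="\<lambda>j. int j - int M" and h="Kf Xp" and v="\<lambda>j. Vf Xp j c" and B="\<lambda>k. rope dK (- int M) (bc c) k"]
      by (simp add: ipk_def add.commute)
    have E: "(\<Sum>k<dK. rope dK (int (M + i)) u k * bKV k c) = ipk dK (int i) (- int M) u (bc c)"
      unfolding ipk_bias[OF ei] bc_def using sh[of 0] by simp
    have "(\<Sum>k<dK. rope dK (int (M + i)) u k * ((\<Sum>j\<in>{1..M + i}. rope dK (int j) (Kf ?L j) k * Vf ?L j c) + bKV k c))
      = (\<Sum>j\<in>{1..M + i}. Vf ?L j c * ipk dK (int (M + i)) (int j) u (Kf ?L j)) + ipk dK (int i) (- int M) u (bc c)"
      by (simp only: num_expand E)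
    also have "\<dots> = (\<Sum>j\<in>{1..M}. Vf ?L j c * ipk dK (int (M + i)) (int j) u (Kf ?L j))
       + (\<Sum>j\<in>{M+1..M + i}. Vf ?L j c * ipk dK (int (M + i)) (int j) u (Kf ?L j)) + ipk dK (int i) (- int M) u (bc c)"
      by (subst split, subst sum.union_disjoint) auto
    also have "\<dots> = (\<Sum>j\<in>{1..M}. Vf Xp j c * ipk dK (int i) (int j - int M) u (Kf Xp j))
       + (\<Sum>j\<in>{1..i}. Vf X j c * ipk dK (int i) (int j) u (Kf X j)) + ipk dK (int i) (- int M) u (bc c)"
      by (simp only: A B)
    also have "\<dots> = (\<Sum>k<dK. rope dK (int i) u k * ((\<Sum>j\<in>{1..i}. rope dK (int j) (Kf X j) k * Vf X j c) +
         (rope_mat dK (- int M) bKV k c +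
              (\<Sum>j\<in>{1..M}. rope dK (int j - int M) (Kf Xp j) k * Vf Xp j c))))"
      by (simp only: num_expand C D)
    finally show ?thesis .
  qed
  show ?thesis
    unfolding attn_out_def Let_def
    apply (rule ext)
    subgoal for c
      using num[of c] unfolding den[symmetric] u_def Kf_def Vf_def hQ
      by (simp add: hQ)
    done
qed

end
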